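(* Let $(A,\circ)$ be a Novikov algebra, $\{a,b\}=a\circ b+b\circ a$ and $[a,b]=a\circ b-b\circ a$. Then for all $a,b,c,d\in A$, $$\{[c,a],[b,d]\}=\{d\circ c,a\circ b\}+\{c\circ d,b\circ a\}-\{b\circ c,a\circ d\}-\{c\circ b,d\circ a\}.$$
   Context: A (right) Novikov algebra is an algebra $(A,\circ)$ satisfying $a\circ(b\circ c)-(a\circ b)\circ c=a\circ(c\circ b)-(a\circ c)\circ b$ and $a\circ(b\circ c)=b\circ(a\circ c)$ for all $a,b,c$. *)

theory Defs
  imports Main "HOL.Vector_Spaces"
begin

definition bilinear_product ::
  "('k::field \<Rightarrow> 'a::ab_group_add \<Rightarrow> 'a) \<Rightarrow> ('a \<Rightarrow> 'a \<Rightarrow> 'a) \<Rightarrow> bool" where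
  "bilinear_product scale m \<longleftrightarrow>
     (\<forall>x y z. m (x + y) z = m x z + m y z) \<and>
     (\<forall>x y z. m x (y + z) = m x y + m x z) \<and>
     (\<forall>c x y. m (scale c x) y = scale c (m x y)) \<and>
     (\<forall>c x y. m x (scale c y) = scale c (m x y))"

definition novikov_algebra ::
  "('k::field \<Rightarrow> 'a::ab_group_add \<Rightarrow> 'a) \<Rightarrow> ('a \<Rightarrow> 'a \<Rightarrow> 'a) \<Rightarrow> bool" where
  "novikov_algebra scale m \<longleftrightarrow>
     vector_space scale \<and> bilinear_product scale m \<and>
     (\<forall>a b c. m a (m b c) - m (m a b) c = m a (m c b) - m (m a c) b) \<and>
     (\<forall>a b c. m a (m b c) = m b (m a c))"

definition anticomm :: "('a \<Rightarrow> 'a \<Rightarrow> 'a::ab_group_add) \<Rightarrow> 'a \<Rightarrow> 'a \<Rightarrow> 'a" where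
  "anticomm m a b = m a b + m b a"

definition comm :: "('a \<Rightarrow> 'a \<Rightarrow> 'a::ab_group_add) \<Rightarrow> 'a \<Rightarrow> 'a \<Rightarrow> 'a" where
  "comm m a b = m a b - m b a"

end

theory Submission
  imports Defs
begin

theorem mainTheorem12:
  fixes scale :: "'k::field \<Rightarrow> 'a::ab_group_add \<Rightarrow> 'a"
    and m :: "'a \<Rightarrow> 'a \<Rightarrow> 'a"
  assumes "novikov_algebra scale m"
  shows "\<forall>a b c d.
    anticomm m (comm m c a) (comm m b d) =
      anticomm m (m d c) (m a b) + anticomm m (m c d) (m b a)
      - anticomm m (m b c) (m a d) - anticomm m (m c b) (m d a)"
proof (intro allI)
  fix a b c d
  have bl: "bilinear_product scale m"
    and n1: "\<forall>a b c. m a (m b c) - m (m a b) c = m a (m c b) - m (m a c) b"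
    and n2: "\<forall>a b c. m a (m b c) = m b (m a c)"
    using assms unfolding novikov_algebra_def by auto
  have ml: "\<And>x y z. m (x + y) z = m x z + m y z"
    and mr: "\<And>x y z. m x (y + z) = m x y + m x z"
    using bl unfolding bilinear_product_def by auto
  have mld: "\<And>x y z. m (x - y) z = m x z - m y z"
  proof -
    fix x y z
    have "m (x - y + y) z = m (x - y) z + m y z" by (rule ml)
    then show "m (x - y) z = m x z - m y z" by (simp add: algebra_simps)
  qed
  have mrd: "\<And>x y z. m x (y - z) = m x y - m x z"
  proof -
    fix x y z
    have "m x (y - z + z) = m x (y - z) + m x z" by (rule mr)
    then show "m x (y - z) = m x y - m x z" by (simp add: algebra_simps)
  qed
  show "anticomm m (comm m c a) (comm m b d) =
      anticomm m (m d c) (m a b) + anticomm m (m c d) (m b a)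
      - anticomm m (m b c) (m a d) - anticomm m (m c b) (m d a)"
  proof -
    have h0: "(m (m b (m c a)) d) - (m (m c (m b a)) d) = 0" using arg_cong[where f="%u. m u d", OF n2[rule_format, of "b" "c" "a"]] by simp
    have h1: "(m b (m (m a d) c) - m (m b (m a d)) c) - (m b (m c (m a d)) - m (m b c) (m a d)) = 0" using n1[rule_format, of "b" "(m a d)" "c"] by simp
    have h2: "(m b (m c (m a d))) - (m c (m b (m a d))) = 0" using n2[rule_format, of "b" "c" "(m a d)"] by simp
    have h3: "(m c (m (m b d) a) - m (m c (m b d)) a) - (m c (m a (m b d)) - m (m c a) (m b d)) = 0" using n1[rule_format, of "c" "(m b d)" "a"] by simp
    have h4: "(m (m c (m d b)) a) - (m (m d (m c b)) a) = 0" using arg_cong[where f="%u. m u a", OF n2[rule_format, of "c" "d" "b"]] by simp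
    have h5: "(m (m c (m b d) - m (m c b) d) a) - (m (m c (m d b) - m (m c d) b) a) = 0" using arg_cong[where f="%u. m u a", OF n1[rule_format, of "c" "b" "d"]] by simp
    have h6: "(m c (m a (m b d))) - (m c (m b (m a d))) = 0" using arg_cong[where f="m c", OF n2[rule_format, of "a" "b" "d"]] by simp
    have h7: "(m d (m a (m b c) - m (m a b) c)) - (m d (m a (m c b) - m (m a c) b)) = 0" using arg_cong[where f="m d", OF n1[rule_format, of "a" "b" "c"]] by simp
    have h8: "(m (m c (m d a)) b) - (m (m d (m c a)) b) = 0" using arg_cong[where f="%u. m u b", OF n2[rule_format, of "c" "d" "a"]] by simp
    have h9: "(m (m c (m a d) - m (m c a) d) b) - (m (m c (m d a) - m (m c d) a) b) = 0" using arg_cong[where f="%u. m u b", OF n1[rule_format, of "c" "a" "d"]] by simp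
    have h10: "(m (m a (m d c)) b) - (m (m d (m a c)) b) = 0" using arg_cong[where f="%u. m u b", OF n2[rule_format, of "a" "d" "c"]] by simp
    have h11: "(m (m a (m c d)) b) - (m (m c (m a d)) b) = 0" using arg_cong[where f="%u. m u b", OF n2[rule_format, of "a" "c" "d"]] by simp
    have h12: "(m (m a (m c d) - m (m a c) d) b) - (m (m a (m d c) - m (m a d) c) b) = 0" using arg_cong[where f="%u. m u b", OF n1[rule_format, of "a" "c" "d"]] by simp
    have h13: "(m (m a d) (m b c) - m (m (m a d) b) c) - (m (m a d) (m c b) - m (m (m a d) c) b) = 0" using n1[rule_format, of "(m a d)" "b" "c"] by simp
    have h14: "(m (m c a) (m b d) - m (m (m c a) b) d) - (m (m c a) (m d b) - m (m (m c a) d) b) = 0" using n1[rule_format, of "(m c a)" "b" "d"] by simp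
    have h15: "(m d (m (m a b) c) - m (m d (m a b)) c) - (m d (m c (m a b)) - m (m d c) (m a b)) = 0" using n1[rule_format, of "d" "(m a b)" "c"] by simp
    have h16: "(m (m a (m d b)) c) - (m (m d (m a b)) c) = 0" using arg_cong[where f="%u. m u c", OF n2[rule_format, of "a" "d" "b"]] by simp
    have h17: "(m (m a (m b d)) c) - (m (m b (m a d)) c) = 0" using arg_cong[where f="%u. m u c", OF n2[rule_format, of "a" "b" "d"]] by simp
    have h18: "(m (m a (m b d) - m (m a b) d) c) - (m (m a (m d b) - m (m a d) b) c) = 0" using arg_cong[where f="%u. m u c", OF n1[rule_format, of "a" "b" "d"]] by simp
    have h19: "(m (m a (m b c) - m (m a b) c) d) - (m (m a (m c b) - m (m a c) b) d) = 0" using arg_cong[where f="%u. m u d", OF n1[rule_format, of "a" "b" "c"]] by simp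
    have h20: "(m (m a b) (m c d)) - (m c (m (m a b) d)) = 0" using n2[rule_format, of "(m a b)" "c" "d"] by simp
    have h21: "(m (m a b) (m c d) - m (m (m a b) c) d) - (m (m a b) (m d c) - m (m (m a b) d) c) = 0" using n1[rule_format, of "(m a b)" "c" "d"] by simp
    have h22: "(m (m a c) (m b d) - m (m (m a c) b) d) - (m (m a c) (m d b) - m (m (m a c) d) b) = 0" using n1[rule_format, of "(m a c)" "b" "d"] by simp
    have h23: "(m c (m d (m a b))) - (m d (m c (m a b))) = 0" using n2[rule_format, of "c" "d" "(m a b)"] by simp
    have h24: "(m d (m (m c b) a) - m (m d (m c b)) a) - (m d (m a (m c b)) - m (m d a) (m c b)) = 0" using n1[rule_format, of "d" "(m c b)" "a"] by simp
    have h25: "(m (m c (m a b) - m (m c a) b) d) - (m (m c (m b a) - m (m c b) a) d) = 0" using arg_cong[where f="%u. m u d", OF n1[rule_format, of "c" "a" "b"]] by simp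
    have h26: "(m c (m b (m d a))) - (m c (m d (m b a))) = 0" using arg_cong[where f="m c", OF n2[rule_format, of "b" "d" "a"]] by simp
    have h27: "(m c (m b (m a d) - m (m b a) d)) - (m c (m b (m d a) - m (m b d) a)) = 0" using arg_cong[where f="m c", OF n1[rule_format, of "b" "a" "d"]] by simp
    have h28: "(m c (m d (m b a))) - (m d (m c (m b a))) = 0" using n2[rule_format, of "c" "d" "(m b a)"] by simp
    have h29: "(m (m a (m b c)) d) - (m (m b (m a c)) d) = 0" using arg_cong[where f="%u. m u d", OF n2[rule_format, of "a" "b" "c"]] by simp
    have h30: "(m d (m (m a c) b) - m (m d (m a c)) b) - (m d (m b (m a c)) - m (m d b) (m a c)) = 0" using n1[rule_format, of "d" "(m a c)" "b"] by simp
    have h31: "(m d (m a (m b c))) - (m d (m b (m a c))) = 0" using arg_cong[where f="m d", OF n2[rule_format, of "a" "b" "c"]] by simp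
    have h32: "(m d (m (m c a) b) - m (m d (m c a)) b) - (m d (m b (m c a)) - m (m d b) (m c a)) = 0" using n1[rule_format, of "d" "(m c a)" "b"] by simp
    have h33: "(m b (m a (m d c))) - (m b (m d (m a c))) = 0" using arg_cong[where f="m b", OF n2[rule_format, of "a" "d" "c"]] by simp
    have h34: "(m b (m a (m c d))) - (m b (m c (m a d))) = 0" using arg_cong[where f="m b", OF n2[rule_format, of "a" "c" "d"]] by simp
    have h35: "(m b (m a (m c d) - m (m a c) d)) - (m b (m a (m d c) - m (m a d) c)) = 0" using arg_cong[where f="m b", OF n1[rule_format, of "a" "c" "d"]] by simp
    have h36: "(m (m c d) (m a b) - m (m (m c d) a) b) - (m (m c d) (m b a) - m (m (m c d) b) a) = 0" using n1[rule_format, of "(m c d)" "a" "b"] by simp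
    have h37: "(m c (m (m a b) d) - m (m c (m a b)) d) - (m c (m d (m a b)) - m (m c d) (m a b)) = 0" using n1[rule_format, of "c" "(m a b)" "d"] by simp
    have h38: "(m (m c b) (m a d) - m (m (m c b) a) d) - (m (m c b) (m d a) - m (m (m c b) d) a) = 0" using n1[rule_format, of "(m c b)" "a" "d"] by simp
    have h39: "(m d (m c (m a b) - m (m c a) b)) - (m d (m c (m b a) - m (m c b) a)) = 0" using arg_cong[where f="m d", OF n1[rule_format, of "c" "a" "b"]] by simp
    have h40: "(m a (m d (m c b))) - (m d (m a (m c b))) = 0" using n2[rule_format, of "a" "d" "(m c b)"] by simp
    have h41: "(m a (m (m c b) d) - m (m a (m c b)) d) - (m a (m d (m c b)) - m (m a d) (m c b)) = 0" using n1[rule_format, of "a" "(m c b)" "d"] by simp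
    have h42: "(m (m c b) (m a d)) - (m a (m (m c b) d)) = 0" using n2[rule_format, of "(m c b)" "a" "d"] by simp
    have h43: "(m d (m a (m c b))) - (m d (m c (m a b))) = 0" using arg_cong[where f="m d", OF n2[rule_format, of "a" "c" "b"]] by simp
    have h44: "(m b (m (m a c) d) - m (m b (m a c)) d) - (m b (m d (m a c)) - m (m b d) (m a c)) = 0" using n1[rule_format, of "b" "(m a c)" "d"] by simp
    have h45: "(m (m b a) (m c d)) - (m c (m (m b a) d)) = 0" using n2[rule_format, of "(m b a)" "c" "d"] by simp
    have h46: "(m b (m d (m c a))) - (m d (m b (m c a))) = 0" using n2[rule_format, of "b" "d" "(m c a)"] by simp
    have h47: "(m b (m (m c a) d) - m (m b (m c a)) d) - (m b (m d (m c a)) - m (m b d) (m c a)) = 0" using n1[rule_format, of "b" "(m c a)" "d"] by simp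
    have h48: "(m (m c a) (m b d)) - (m b (m (m c a) d)) = 0" using n2[rule_format, of "(m c a)" "b" "d"] by simp
    have h49: "(m b (m d (m a c))) - (m d (m b (m a c))) = 0" using n2[rule_format, of "b" "d" "(m a c)"] by simp
    have "anticomm m (comm m c a) (comm m b d) - (anticomm m (m d c) (m a b) + anticomm m (m c d) (m b a) - anticomm m (m b c) (m a d) - anticomm m (m c b) (m d a)) = ((m (m b (m c a)) d) - (m (m c (m b a)) d)) + ((m b (m (m a d) c) - m (m b (m a d)) c) - (m b (m c (m a d)) - m (m b c) (m a d))) + (((m b (m c (m a d))) - (m c (m b (m a d)))) + ((m b (m c (m a d))) - (m c (m b (m a d))))) + - ((m c (m (m b d) a) - m (m c (m b d)) a) - (m c (m a (m b d)) - m (m c a) (m b d))) + - ((m (m c (m d b)) a) - (m (m d (m c b)) a)) + - ((m (m c (m b d) - m (m c b) d) a) - (m (m c (m d b) - m (m c d) b) a)) + - ((m c (m a (m b d))) - (m c (m b (m a d)))) + - ((m d (m a (m b c) - m (m a b) c)) - (m d (m a (m c b) - m (m a c) b))) + ((m (m c (m d a)) b) - (m (m d (m c a)) b)) + ((m (m c (m a d) - m (m c a) d) b) - (m (m c (m d a) - m (m c d) a) b)) + - ((m (m a (m d c)) b) - (m (m d (m a c)) b)) + ((m (m a (m c d)) b) - (m (m c (m a d)) b)) + - ((m (m a (m c d) - m (m a c) d) b) - (m (m a (m d c) - m (m a d) c) b)) + ((m (m a d) (m b c) - m (m (m a d) b) c) - (m (m a d) (m c b) - m (m (m a d) c) b))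 + ((m (m c a) (m b d) - m (m (m c a) b) d) - (m (m c a) (m d b) - m (m (m c a) d) b)) + - ((m d (m (m a b) c) - m (m d (m a b)) c) - (m d (m c (m a b)) - m (m d c) (m a b))) + ((m (m a (m d b)) c) - (m (m d (m a b)) c)) + - ((m (m a (m b d)) c) - (m (m b (m a d)) c)) + ((m (m a (m b d) - m (m a b) d) c) - (m (m a (m d b) - m (m a d) b) c)) + - ((m (m a (m b c) - m (m a b) c) d) - (m (m a (m c b) - m (m a c) b) d)) + - ((m (m a b) (m c d)) - (m c (m (m a b) d))) + ((m (m a b) (m c d) - m (m (m a b) c) d) - (m (m a b) (m d c) - m (m (m a b) d) c)) + - ((m (m a c) (m b d) - m (m (m a c) b) d) - (m (m a c) (m d b) - m (m (m a c) d) b)) + - ((m c (m d (m a b))) - (m d (m c (m a b)))) + ((m d (m (m c b) a) - m (m d (m c b)) a) - (m d (m a (m c b)) - m (m d a) (m c b))) + - ((m (m c (m a b) - m (m c a) b) d) - (m (m c (m b a) - m (m c b) a) d)) + ((m c (m b (m d a))) - (m c (m d (m b a)))) + ((m c (m b (m a d) - m (m b a) d)) - (m c (m b (m d a) - m (m b d) a))) + ((m c (m d (m b a))) - (m d (m c (m b a)))) + ((m (m a (m b c)) d) - (m (m b (m a c)) d)) + ((m d (m (m a c) b) - m (m d (m a c)) b) - (m d (m b (m a c)) - m (m d b) (m a c))) + ((m d (m a (m b c))) - (m d (m b (m a c)))) + - ((m d (m (m c a) b) - m (m d (m c a)) b) - (m d (m b (m c a)) - m (m d b) (m c a))) + - ((m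 b (m a (m d c))) - (m b (m d (m a c)))) + ((m b (m a (m c d))) - (m b (m c (m a d)))) + - ((m b (m a (m c d) - m (m a c) d)) - (m b (m a (m d c) - m (m a d) c))) + ((m (m c d) (m a b) - m (m (m c d) a) b) - (m (m c d) (m b a) - m (m (m c d) b) a)) + - ((m c (m (m a b) d) - m (m c (m a b)) d) - (m c (m d (m a b)) - m (m c d) (m a b))) + - ((m (m c b) (m a d) - m (m (m c b) a) d) - (m (m c b) (m d a) - m (m (m c b) d) a)) + - ((m d (m c (m a b) - m (m c a) b)) - (m d (m c (m b a) - m (m c b) a))) + ((m a (m d (m c b))) - (m d (m a (m c b)))) + ((m a (m (m c b) d) - m (m a (m c b)) d) - (m a (m d (m c b)) - m (m a d) (m c b))) + ((m (m c b) (m a d)) - (m a (m (m c b) d))) + ((m d (m a (m c b))) - (m d (m c (m a b)))) + - ((m b (m (m a c) d) - m (m b (m a c)) d) - (m b (m d (m a c)) - m (m b d) (m a c))) + - ((m (m b a) (m c d)) - (m c (m (m b a) d))) + ((m b (m d (m c a))) - (m d (m b (m c a)))) + ((m b (m (m c a) d) - m (m b (m c a)) d) - (m b (m d (m c a)) - m (m b d) (m c a))) + ((m (m c a) (m b d)) - (m b (m (m c a) d))) + - (((m b (m d (m a c))) - (m d (m b (m a c)))) + ((m b (m d (m a c))) - (m d (m b (m a c)))))"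
      unfolding anticomm_def comm_def by (simp add: ml mr mld mrd algebra_simps)
    also have "... = 0" by (simp only: h0 h1 h2 h3 h4 h5 h6 h7 h8 h9 h10 h11 h12 h13 h14 h15 h16 h17 h18 h19 h20 h21 h22 h23 h24 h25 h26 h27 h28 h29 h30 h31 h32 h33 h34 h35 h36 h37 h38 h39 h40 h41 h42 h43 h44 h45 h46 h47 h48 h49) simp
    finally show ?thesis by simp
  qed
qed

end
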